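(* Let $\mathcal L$ be a language satisfying RBC with growth constant $K$. Then there is $N$ such that for every $w\in\mathcal L$ with $|w|\ge N$ that has a valid step, the set of exit words for $w$ with its minimal valid step $q$ has at most $2K^2$ elements.
   Context: A language is a set $\mathcal L$ of nonempty finite words over a finite alphabet $\mathcal A$, containing $\mathcal A$, closed under subwords, every word extendable on both sides. $Ex^\ell(w)=\{a:aw\in\mathcal L\}$, $Ex^r(w)=\{b:wb\in\mathcal L\}$; left special if $|Ex^\ell(w)|\ge2$, right special if $|Ex^r(w)|\ge2$, bispecial if both; regular bispecial if there is exactly one $\hat a\in Ex^\ell(w)$ with $\hat aw$ right special and exactly one $\hat b\in Ex^r(w)$ with $w\hat b$ left special. RBC: for some $n_0$ every bispecial word of length $\ge n_0$ is regular bispecial. Under RBC, $p(n+1)-p(n)$ ($p(n)$ the number of length-$n$ words of $\mathcal L$) equals a constant $K$ for all large $n$: the growth constant. For $n\ge2$, $w\in\mathcal A^n$ and integer $1\le q\le n/2$ with $w_{[q+1,n]}=w_{[1,n-q]}$, $w^{q\ast r}$ is the word of length $n+(r-1)q$ with $(w^{q\ast r})_{[q(i-1)+1,q(i-1)+n]}=w$ for $1\le i\le r$; $q$ is valid for $w$ in $\mathcal L$ if moreover $w^{q\ast2}\in\mathcal L$; the minimal valid step is the least one. An exit word for $w$ with step $q$ is a word $z=pw^{q\ast r}s$, $r\ge1$, $1\le|p|,|s|\le q$, such that $z\in\mathcal L$; $pw^{q\ast r}$ is not a suffix of $w^{q\ast(r+1)}$ but $p_{[2,|p|]}w^{q\ast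 r}$ is; and $w^{q\ast r}s$ is not a prefix of $w^{q\ast(r+1)}$ but $w^{q\ast r}s_{[1,|s|-1]}$ is (with $p_{[2,1]}$, $s_{[1,0]}$ empty). *)

theory Defs
  imports Main "HOL-Library.Sublist"
begin

definition language :: "'a set \<Rightarrow> 'a list set \<Rightarrow> bool" where
  "language A L \<longleftrightarrow> finite A
     \<and> (\<forall>w\<in>L. w \<noteq> [] \<and> set w \<subseteq> A)
     \<and> (\<forall>a\<in>A. [a] \<in> L)
     \<and> (\<forall>u x v. u @ x @ v \<in> L \<and> x \<noteq> [] \<longrightarrow> x \<in> L)
     \<and> (\<forall>w\<in>L. (\<exists>a. a # w \<in> L) \<and> (\<exists>b. w @ [b] \<in> L))"

definition Ex_l :: "'a list set \<Rightarrow> 'a list \<Rightarrow> 'a set" where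
  "Ex_l L w = {a. a # w \<in> L}"

definition Ex_r :: "'a list set \<Rightarrow> 'a list \<Rightarrow> 'a set" where
  "Ex_r L w = {b. w @ [b] \<in> L}"

definition left_special :: "'a list set \<Rightarrow> 'a list \<Rightarrow> bool" where
  "left_special L w \<longleftrightarrow> card (Ex_l L w) \<ge> 2"

definition right_special :: "'a list set \<Rightarrow> 'a list \<Rightarrow> bool" where
  "right_special L w \<longleftrightarrow> card (Ex_r L w) \<ge> 2"

definition bispecial :: "'a list set \<Rightarrow> 'a list \<Rightarrow> bool" where
  "bispecial L w \<longleftrightarrow> left_special L w \<and> right_special L w"

definition regular_bispecial :: "'a list set \<Rightarrow> 'a list \<Rightarrow> bool" where
  "regular_bispecial L w \<longleftrightarrow> bispecial L w
     \<and> (\<exists>!a. a \<in> Ex_l L w \<and> right_special L (a # w))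
     \<and> (\<exists>!b. b \<in> Ex_r L w \<and> left_special L (w @ [b]))"

definition RBC :: "'a list set \<Rightarrow> bool" where
  "RBC L \<longleftrightarrow> (\<exists>n0. \<forall>w\<in>L. bispecial L w \<and> length w \<ge> n0 \<longrightarrow> regular_bispecial L w)"

definition complexity :: "'a list set \<Rightarrow> nat \<Rightarrow> nat" where
  "complexity L n = card {w\<in>L. length w = n}"

definition growth_constant :: "'a list set \<Rightarrow> int \<Rightarrow> bool" where
  "growth_constant L K \<longleftrightarrow>
     (\<exists>n1. \<forall>n\<ge>n1. int (complexity L (Suc n)) - int (complexity L n) = K)"

definition has_period :: "'a list \<Rightarrow> nat \<Rightarrow> bool" where
  "has_period w q \<longleftrightarrow> drop q w = take (length w - q) w"

text \<open>w^{q*r}: word of length n+(r-1)q all of whose factors at positions q(i-1)+1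
  (1 <= i <= r) equal w (for w having period q): (w_[1,q])^(r-1) w.\<close>
definition qpow :: "'a list \<Rightarrow> nat \<Rightarrow> nat \<Rightarrow> 'a list" where
  "qpow w q r = concat (replicate (r - 1) (take q w)) @ w"

definition valid_step :: "'a list set \<Rightarrow> 'a list \<Rightarrow> nat \<Rightarrow> bool" where
  "valid_step L w q \<longleftrightarrow> length w \<ge> 2 \<and> 1 \<le> q \<and> 2 * q \<le> length w
     \<and> has_period w q \<and> qpow w q 2 \<in> L"

definition min_valid_step :: "'a list set \<Rightarrow> 'a list \<Rightarrow> nat" where
  "min_valid_step L w = (LEAST q. valid_step L w q)"

definition exit_words :: "'a list set \<Rightarrow> 'a list \<Rightarrow> nat \<Rightarrow> 'a list set" where
  "exit_words L w q = {z. \<exists>p s r. z = p @ qpow w q r @ s \<and> r \<ge> 1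
      \<and> 1 \<le> length p \<and> length p \<le> q \<and> 1 \<le> length s \<and> length s \<le> q
      \<and> z \<in> L
      \<and> \<not> suffix (p @ qpow w q r) (qpow w q (r + 1))
      \<and> suffix (tl p @ qpow w q r) (qpow w q (r + 1))
      \<and> \<not> prefix (qpow w q r @ s) (qpow w q (r + 1))
      \<and> prefix (qpow w q r @ butlast s) (qpow w q (r + 1))}"

end

theory Submission
  imports Defs
begin

definition pf :: "'a list \<Rightarrow> nat \<Rightarrow> nat \<Rightarrow> 'a" where
  "pf w q k = w ! (k mod q)"

lemma factor_in_L:
  assumes "language A L" "z \<in> L" "length x > 0" "i + length x \<le> length z"
    "\<And>k. k < length x \<Longrightarrow> x ! k = z ! (i + k)"
  shows "x \<in> L"
proof -
  have x: "x = take (length x) (drop i z)"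
    by (rule nth_equalityI) (use assms(4,5) in auto)
  have "z = take i z @ take (length x) (drop i z) @ drop (length x) (drop i z)"
    by (metis append_take_drop_id)
  with x have "take i z @ x @ drop (length x) (drop i z) \<in> L" using assms(2) by metis
  thus ?thesis using assms(1,3) unfolding language_def by blast
qed

lemma period_nth:
  assumes "has_period w q" "q \<ge> 1"
  shows "k < length w \<Longrightarrow> w ! k = w ! (k mod q)"
proof (induction k rule: less_induct)
  case (less k)
  show ?case
  proof (cases "k < q")
    case True thus ?thesis by simp
  next
    case False
    have "drop q w ! (k - q) = take (length w - q) w ! (k - q)"
      using assms(1) unfolding has_period_def by simp
    hence "w ! k = w ! (k - q)" using False less.prems by simp
    also have "\<dots> = w ! ((k - q) mod q)" using less False assms(2) by simp
    also have "(k - q) mod q = k mod q" using False by (simp add: le_mod_geq)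
    finally show ?thesis .
  qed
qed

lemma pf_add[simp]: "pf w q (k + q) = pf w q k" "pf w q (q + k) = pf w q k"
  "pf w q (k + c * q) = pf w q k"
  by (simp_all add: pf_def)

lemma qpow_map:
  assumes "has_period w q" "q \<ge> 1" "q \<le> length w" "r \<ge> 1"
  shows "qpow w q r = map (pf w q) [0..<length w + (r - 1) * q]"
  using assms(4)
proof (induction r rule: dec_induct)
  case base
  show ?case unfolding qpow_def
    by (auto intro!: nth_equalityI simp: pf_def period_nth[OF assms(1,2)])
next
  case (step r)
  have "qpow w q (Suc r) = take q w @ qpow w q r"
    using step(1) unfolding qpow_def
    by (cases r) simp_all
  also have "take q w = map (pf w q) [0..<q]"
    using assms by (auto intro!: nth_equalityI simp: pf_def)
  also have "qpow w q r = map (\<lambda>i. pf w q (i + q)) [0..<length w + (r - 1) * q]"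
    using step by simp
  also have "\<dots> = map (pf w q) [q..<q + (length w + (r - 1) * q)]"
    by (rule nth_equalityI) auto
  also have "map (pf w q) [0..<q] @ \<dots> = map (pf w q) [0..<length w + (Suc r - 1) * q]"
  proof -
    have "length w + (Suc r - 1) * q = q + (length w + (r - 1) * q)"
      using step(1) by (cases r) auto
    moreover have "[0..<q + (length w + (r - 1) * q)] = [0..<q] @ [q..<q + (length w + (r - 1) * q)]"
      by (rule upt_add_eq_append) simp
    ultimately show ?thesis by (simp only: map_append)
  qed
  finally show ?case .
qed

lemma finite_Ln: "language A L \<Longrightarrow> finite {v\<in>L. length v = n}"
proof -
  assume l: "language A L"
  have "{v\<in>L. length v = n} \<subseteq> {xs. set xs \<subseteq> A \<and> length xs = n}"
    using l unfolding language_def by blast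
  moreover have "finite A" using l unfolding language_def by blast
  ultimately show ?thesis using finite_subset finite_lists_length_eq by blast
qed

lemma Ex_fin: "language A L \<Longrightarrow> finite (Ex_l L v)" "language A L \<Longrightarrow> finite (Ex_r L v)"
proof -
  assume l: "language A L"
  have "finite A" using l unfolding language_def by blast
  moreover have "Ex_l L v \<subseteq> A" "Ex_r L v \<subseteq> A"
    using l unfolding language_def Ex_l_def Ex_r_def by fastforce+
  ultimately show "finite (Ex_l L v)" "finite (Ex_r L v)" using finite_subset by blast+
qed

lemma Ex_ne: "language A L \<Longrightarrow> v \<in> L \<Longrightarrow> Ex_l L v \<noteq> {}"
   "language A L \<Longrightarrow> v \<in> L \<Longrightarrow> Ex_r L v \<noteq> {}"
  unfolding language_def Ex_l_def Ex_r_def by blast+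

lemma lang_fac: "language A L \<Longrightarrow> u @ x @ v \<in> L \<Longrightarrow> x \<noteq> [] \<Longrightarrow> x \<in> L"
  unfolding language_def by blast

lemma lang_tl: "language A L \<Longrightarrow> a # v \<in> L \<Longrightarrow> v \<noteq> [] \<Longrightarrow> v \<in> L"
  using lang_fac[of A L "[a]" v "[]"] by simp

lemma lang_butlast: "language A L \<Longrightarrow> v @ [b] \<in> L \<Longrightarrow> v \<noteq> [] \<Longrightarrow> v \<in> L"
  using lang_fac[of A L "[]" v "[b]"] by simp

lemma compl_l:
  assumes "language A L" "n \<ge> 1"
  shows "complexity L (Suc n) = (\<Sum>v\<in>{v\<in>L. length v = n}. card (Ex_l L v))"
proof -
  have "{u\<in>L. length u = Suc n} = (\<lambda>(v,a). a # v) ` (SIGMA v:{v\<in>L. length v = n}. Ex_l L v)"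
  proof (rule set_eqI, rule iffI)
    fix u assume "u \<in> {u\<in>L. length u = Suc n}"
    then obtain a v where u: "u = a # v" "u \<in> L" "length v = n" by (cases u) auto
    hence "v \<in> L" using lang_tl[OF assms(1), of a v] assms(2) by force
    thus "u \<in> (\<lambda>(v,a). a # v) ` (SIGMA v:{v\<in>L. length v = n}. Ex_l L v)"
      using u by (auto simp: Ex_l_def)
  qed (auto simp: Ex_l_def)
  moreover have "inj_on (\<lambda>(v,a). a # v) (SIGMA v:{v\<in>L. length v = n}. Ex_l L v)"
    by (auto simp: inj_on_def)
  ultimately show ?thesis unfolding complexity_def
    by (simp add: card_image finite_Ln[OF assms(1)] Ex_fin[OF assms(1)])
qed

lemma compl_r:
  assumes "language A L" "n \<ge> 1"
  shows "complexity L (Suc n) = (\<Sum>v\<in>{v\<in>L. length v = n}. card (Ex_r L v))"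
proof -
  have "{u\<in>L. length u = Suc n} = (\<lambda>(v,a). v @ [a]) ` (SIGMA v:{v\<in>L. length v = n}. Ex_r L v)"
  proof (rule set_eqI, rule iffI)
    fix u assume "u \<in> {u\<in>L. length u = Suc n}"
    then obtain a v where u: "u = v @ [a]" "u \<in> L" "length v = n" by (cases u rule: rev_cases) auto
    hence "v \<in> L" using lang_butlast[OF assms(1), of v a] assms(2) by force
    thus "u \<in> (\<lambda>(v,a). v @ [a]) ` (SIGMA v:{v\<in>L. length v = n}. Ex_r L v)"
      using u by (auto simp: Ex_r_def)
  qed (auto simp: Ex_r_def)
  moreover have "inj_on (\<lambda>(v,a). v @ [a]) (SIGMA v:{v\<in>L. length v = n}. Ex_r L v)"
    by (auto simp: inj_on_def)
  ultimately show ?thesis unfolding complexity_def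
    by (simp add: card_image finite_Ln[OF assms(1)] Ex_fin[OF assms(1)])
qed

lemma bound_gen:
  assumes fin: "finite Ln" and ne: "\<And>v. v \<in> Ln \<Longrightarrow> card (E v) \<ge> 1"
    and V: "V \<subseteq> Ln"
  shows "int (\<Sum>v\<in>V. card (E v) - 1) \<le> int (\<Sum>v\<in>Ln. card (E v)) - int (card Ln)"
proof -
  have "(\<Sum>v\<in>V. card (E v) - 1) \<le> (\<Sum>v\<in>Ln. card (E v) - 1)"
    by (rule sum_mono2[OF fin V]) auto
  hence "int (\<Sum>v\<in>V. card (E v) - 1) \<le> int (\<Sum>v\<in>Ln. card (E v) - 1)"
    by (simp only: of_nat_le_iff)
  also have "\<dots> = (\<Sum>v\<in>Ln. int (card (E v) - 1))"
    by (rule of_nat_sum)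
  also have "\<dots> = (\<Sum>v\<in>Ln. int (card (E v)) - 1)"
    by (rule sum.cong) (use ne in auto)
  also have "\<dots> = int (\<Sum>v\<in>Ln. card (E v)) - int (card Ln)"
    by (simp add: sum_subtractf)
  finally show ?thesis .
qed

lemma bound_l:
  assumes "language A L" "n \<ge> 1" "V \<subseteq> {v\<in>L. length v = n}"
  shows "int (\<Sum>v\<in>V. card (Ex_l L v) - 1) \<le> int (complexity L (Suc n)) - int (complexity L n)"
  unfolding compl_l[OF assms(1,2)]
  using bound_gen[OF finite_Ln[OF assms(1)] _ assms(3), of "Ex_l L"]
    Ex_fin[OF assms(1)] Ex_ne[OF assms(1)]
  by (simp add: complexity_def Suc_le_eq card_gt_0_iff)

lemma bound_r:
  assumes "language A L" "n \<ge> 1" "V \<subseteq> {v\<in>L. length v = n}"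
  shows "int (\<Sum>v\<in>V. card (Ex_r L v) - 1) \<le> int (complexity L (Suc n)) - int (complexity L n)"
  unfolding compl_r[OF assms(1,2)]
  using bound_gen[OF finite_Ln[OF assms(1)] _ assms(3), of "Ex_r L"]
    Ex_fin[OF assms(1)] Ex_ne[OF assms(1)]
  by (simp add: complexity_def Suc_le_eq card_gt_0_iff)

lemma periodic_extend:
  fixes P :: "nat \<Rightarrow> bool" and q j :: nat
  assumes per: "\<And>k. P (k + q) = P k" and q: "q > 0"
    and base: "\<And>k. j \<le> k \<Longrightarrow> k < j + q \<Longrightarrow> P k"
  shows "P k"
proof -
  have mult: "P (k + c * q) = P k" for k c
  proof (induction c)
    case (Suc c)
    have e: "k + Suc c * q = (k + c * q) + q" by simp
    show ?case unfolding e by (simp only: per Suc.IH)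
  qed simp
  have ge: "P k'" if "k' \<ge> j" for k'
    using that
  proof (induction k' rule: less_induct)
    case (less k')
    show ?case
    proof (cases "k' < j + q")
      case True thus ?thesis using base less.prems by blast
    next
      case False
      hence "P (k' - q)" using less q by auto
      moreover have "k' - q + q = k'" using False by simp
      ultimately show ?thesis using per[of "k' - q"] by simp
    qed
  qed
  have "k + j * q \<ge> j" using q by (simp add: trans_le_add2)
  hence "P (k + j * q)" by (rule ge)
  thus ?thesis using mult by simp
qed

lemma pf_nth: "has_period w q \<Longrightarrow> q \<ge> 1 \<Longrightarrow> k < length w \<Longrightarrow> w ! k = pf w q k"
  using period_nth by (simp add: pf_def)

lemma pf_add3: "pf w q (a + c * q + b) = pf w q (a + b)"
proof -
  have e: "a + c * q + b = (a + b) + c * q" by simp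
  show ?thesis unfolding e by (rule pf_add(3))
qed

lemma F_inj:
  assumes lang: "language A L" and vs: "valid_step L w q"
    and mn: "\<And>d. valid_step L w d \<Longrightarrow> q \<le> d"
    and jj: "j < j'" "j' < j + q"
    and eq: "map (pf w q) [j..<j + length w] = map (pf w q) [j'..<j' + length w]"
  shows False
proof -
  define n where "n = length w"
  define per where "per = pf w q"
  define d where "d = j' - j"
  have q1: "q \<ge> 1" and q2: "2 * q \<le> n" and hp: "has_period w q" and n2: "n \<ge> 2"
    and V: "qpow w q 2 \<in> L"
    using vs unfolding valid_step_def n_def by auto
  have d: "0 < d" "d < q" using jj by (auto simp: d_def)
  have h: "per (j + i) = per (j + i + d)" if "i < n" for i
  proof -
    have "map per [j..<j + n] ! i = map per [j'..<j' + n] ! i"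
      using eq by (simp add: per_def n_def)
    thus ?thesis using that jj by (simp add: d_def add.commute)
  qed
  have Pall: "per k = per (k + d)" for k
  proof (rule periodic_extend[where P="\<lambda>k. per k = per (k + d)" and q=q and j=j])
    show "(per (k + q) = per (k + q + d)) = (per k = per (k + d))" for k
    proof -
      have e: "k + q + d = (k + d) + q" by simp
      show ?thesis by (simp only: e per_def pf_add(1))
    qed
    show "q > 0" using q1 by simp
    show "per k = per (k + d)" if "j \<le> k" "k < j + q" for k
      using h[of "k - j"] that q2 by simp
  qed
  have Pmult: "per (k + c * d) = per k" for k c
  proof (induction c)
    case (Suc c)
    have e: "k + Suc c * d = (k + c * d) + d" by simp
    show ?case unfolding e using Pall[of "k + c * d"] Suc.IH by simp
  qed simp
  have wper: "w ! k = per k" if "k < n" for k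
    using pf_nth[OF hp q1] that by (simp add: per_def n_def)
  have hpd: "has_period w d"
    unfolding has_period_def
  proof (rule nth_equalityI)
    show "length (drop d w) = length (take (length w - d) w)" by simp
    fix i assume "i < length (drop d w)"
    hence i: "d + i < n" by (simp add: n_def)
    hence "drop d w ! i = per (i + d)" using wper[of "d + i"] by (simp add: add.commute n_def)
    also have "\<dots> = w ! i" using Pall[of i] wper[of i] i by simp
    finally show "drop d w ! i = take (length w - d) w ! i" using i by (simp add: n_def)
  qed
  have "qpow w d 2 \<in> L"
  proof (rule factor_in_L[OF lang V, where i = "q - d"])
    have Qd: "qpow w d 2 = map (pf w d) [0..<n + d]"
      using qpow_map[OF hpd, of 2] d q2 by (simp add: n_def)
    have Qq: "qpow w q 2 = map per [0..<n + q]"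
      using qpow_map[OF hp q1, of 2] q2 by (simp add: n_def per_def)
    show "length (qpow w d 2) > 0" using Qd n2 by simp
    show "q - d + length (qpow w d 2) \<le> length (qpow w q 2)" using Qd Qq d by simp
    fix k assume k: "k < length (qpow w d 2)"
    hence k': "k < n + d" using Qd by simp
    have "qpow w d 2 ! k = w ! (k mod d)" using Qd k' by (simp add: pf_def)
    also have "\<dots> = per (k mod d)"
    proof -
      have "k mod d < n" using mod_less_divisor[of d k] d q2 by linarith
      thus ?thesis using wper by simp
    qed
    also have "\<dots> = per k" using Pmult[of "k mod d" "k div d"] by simp
    also have "\<dots> = per (q - d + k + d)" using d by (simp add: per_def)
    also have "\<dots> = per (q - d + k)" using Pall[of "q - d + k"] by simp
    also have "\<dots> = qpow w q 2 ! (q - d + k)" using Qq k' d by simp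
    finally show "qpow w d 2 ! k = qpow w q 2 ! (q - d + k)" .
  qed
  hence "valid_step L w d" using hpd d q2 n2 unfolding valid_step_def n_def by auto
  with mn d show False by fastforce
qed

lemma map_pf_shift: "map (pf w q) [0..<Y] = map (pf w q) [q..<q + Y]"
  by (rule nth_equalityI) auto

lemma map_pf_join: "j \<le> q \<Longrightarrow> map (pf w q) [j..<q] @ map (pf w q) [0..<Y] = map (pf w q) [j..<q + Y]"
  unfolding map_pf_shift[of w q Y]
  by (metis map_append upt_add_eq_append)

lemma exit_char:
  assumes vs: "valid_step L w q" and z: "z \<in> exit_words L w q"
  shows "\<exists>j m r a b. 1 \<le> j \<and> j \<le> q \<and> m < q \<and> r \<ge> 1 \<and> a \<noteq> pf w q (j - 1)
     \<and> b \<noteq> pf w q (length w + m)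
     \<and> z = a # map (pf w q) [j..<length w + r * q + m] @ [b] \<and> z \<in> L"
proof -
  define n where "n = length w"
  define per where "per = pf w q"
  have q1: "q \<ge> 1" and q2: "2 * q \<le> n" and hp: "has_period w q"
    using vs unfolding valid_step_def n_def by auto
  obtain p s r where zz: "z = p @ qpow w q r @ s" "r \<ge> 1"
      "1 \<le> length p" "length p \<le> q" "1 \<le> length s" "length s \<le> q" "z \<in> L"
      "\<not> suffix (p @ qpow w q r) (qpow w q (r + 1))"
      "suffix (tl p @ qpow w q r) (qpow w q (r + 1))"
      "\<not> prefix (qpow w q r @ s) (qpow w q (r + 1))"
      "prefix (qpow w q r @ butlast s) (qpow w q (r + 1))"
    using z unfolding exit_words_def by blast
  define W where "W = map per [0..<n + (r - 1) * q]"
  define T where "T = map per [0..<q]"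
  define R where "R = map per [n + (r - 1) * q..<n + r * q]"
  have QW: "qpow w q r = W" using qpow_map[OF hp q1 _ zz(2)] q2 by (simp add: W_def per_def n_def)
  have QW': "qpow w q (r + 1) = map per [0..<n + r * q]"
    using qpow_map[OF hp q1, of "r + 1"] q2 by (simp add: per_def n_def)
  have nrq: "n + r * q = q + (n + (r - 1) * q)" using zz(2) by (cases r) auto
  have W1: "qpow w q (r + 1) = T @ W"
    unfolding QW' T_def W_def per_def nrq using map_pf_join[of 0 q w] by simp
  have nrq2: "n + r * q = (n + (r - 1) * q) + q" using nrq by simp
  have W2: "qpow w q (r + 1) = W @ R"
    unfolding QW' R_def W_def nrq2 by (simp add: upt_add_eq_append[of 0])
  define l where "l = length p"
  define j where "j = q + 1 - l"
  define m where "m = length s - 1"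
  define a where "a = hd p"
  define b where "b = last s"
  have j: "1 \<le> j" "j \<le> q" using zz(3,4) by (auto simp: j_def l_def)
  have m: "m < q" using zz(5,6) by (auto simp: m_def)
  obtain zs where "T @ W = zs @ tl p @ W" using zz(9) unfolding QW W1 by (auto elim: suffixE)
  hence Tz: "T = zs @ tl p" by simp
  have tlp: "tl p = map per [j..<q]"
  proof -
    have "tl p = drop (length T - length (tl p)) T" using Tz by simp
    moreover have "length T - length (tl p) = j" using zz(3,4) by (simp add: T_def j_def l_def)
    ultimately show ?thesis by (simp add: T_def drop_map)
  qed
  have p: "p = a # map per [j..<q]" using zz(3) tlp unfolding a_def by (cases p) auto
  have a: "a \<noteq> per (j - 1)"
  proof
    assume "a = per (j - 1)"
    hence "p = map per [j - 1..<q]" using p j by (simp add: upt_conv_Cons)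
    hence "p @ W = drop (j - 1) (T @ W)" using j by (simp add: T_def drop_map)
    hence "suffix (p @ qpow w q r) (qpow w q (r + 1))" unfolding QW W1 by (metis suffix_drop)
    thus False using zz(8) by simp
  qed
  obtain ys where "W @ R = W @ butlast s @ ys" using zz(11) unfolding QW W2 by (auto elim: prefixE)
  hence Rz: "R = butlast s @ ys" by simp
  have bs: "butlast s = map per [n + (r - 1) * q..<n + (r - 1) * q + m]"
  proof -
    have "butlast s = take (length (butlast s)) R" using Rz by simp
    moreover have "length (butlast s) = m" by (simp add: m_def)
    ultimately show ?thesis using m by (simp add: R_def take_map nrq2 m_def)
  qed
  have s: "s = butlast s @ [b]" using zz(5) unfolding b_def by (cases s rule: rev_cases) auto
  have b: "b \<noteq> per (n + m)"
  proof
    assume "b = per (n + m)"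
    hence "b = per (n + (r - 1) * q + m)" by (simp add: per_def pf_add3)
    hence "s = map per [n + (r - 1) * q..<Suc (n + (r - 1) * q + m)]" using s bs by simp
    also have "\<dots> = take (m + 1) R" using m unfolding R_def nrq2 take_map
      by (subst take_upt) auto
    finally have "s = take (m + 1) R" .
    hence "prefix (qpow w q r @ s) (qpow w q (r + 1))" unfolding QW W2
      by (metis append_take_drop_id prefixI append_assoc)
    thus False using zz(10) by simp
  qed
  have "z = a # map per [j..<n + r * q + m] @ [b]"
  proof -
    have e1: "W @ map per [n + (r - 1) * q..<n + (r - 1) * q + m] = map per [0..<n + (r - 1) * q + m]"
      unfolding W_def by (simp add: upt_add_eq_append[of 0])
    have e2: "map per [j..<q] @ map per [0..<n + (r - 1) * q + m] = map per [j..<q + (n + (r - 1) * q + m)]"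
      unfolding per_def by (rule map_pf_join[OF j(2)])
    have e3: "q + (n + (r - 1) * q + m) = n + r * q + m" using nrq by simp
    have "z = a # (map per [j..<q] @ (W @ map per [n + (r - 1) * q..<n + (r - 1) * q + m])) @ [b]"
      using zz(1) QW p s bs by simp
    thus ?thesis unfolding e1 e2 e3 .
  qed
  thus ?thesis using j m zz(2,7) a b unfolding per_def n_def by blast
qed

lemma nthG: "j \<le> N \<Longrightarrow> i \<le> N - j + 1 \<Longrightarrow>
  (a # map f [j..<N] @ [b]) ! i = (if i = 0 then a else if i \<le> N - j then f (j + i - 1) else b)"
  by (cases i) (auto simp: nth_append)

lemma sub_G:
  assumes lang: "language A L" and z2: "a # map f [j..<N2] @ [b] \<in> L"
    and jN: "j \<le> N1" "N1 \<le> N2" and fit: "t + (N1 - j) \<le> N2 - j"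
    and sh: "\<And>k. 1 \<le> k \<Longrightarrow> k \<le> N1 - j \<Longrightarrow> f (j + t + k - 1) = f (j + k - 1)"
  shows "(if t = 0 then a else f (j + t - 1)) # map f [j..<N1]
      @ [if t + (N1 - j) + 1 \<le> N2 - j then f (j + t + (N1 - j)) else b] \<in> L"
proof (rule factor_in_L[OF lang z2, where i = t])
  show "length ((if t = 0 then a else f (j + t - 1)) # map f [j..<N1]
      @ [if t + (N1 - j) + 1 \<le> N2 - j then f (j + t + (N1 - j)) else b]) > 0" by simp
  show "t + length ((if t = 0 then a else f (j + t - 1)) # map f [j..<N1]
      @ [if t + (N1 - j) + 1 \<le> N2 - j then f (j + t + (N1 - j)) else b])
      \<le> length (a # map f [j..<N2] @ [b])" using fit jN by simp
  fix k assume k: "k < length ((if t = 0 then a else f (j + t - 1)) # map f [j..<N1]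
      @ [if t + (N1 - j) + 1 \<le> N2 - j then f (j + t + (N1 - j)) else b])"
  hence k': "k \<le> N1 - j + 1" by simp
  have L: "((if t = 0 then a else f (j + t - 1)) # map f [j..<N1]
      @ [if t + (N1 - j) + 1 \<le> N2 - j then f (j + t + (N1 - j)) else b]) ! k =
     (if k = 0 then (if t = 0 then a else f (j + t - 1)) else if k \<le> N1 - j then f (j + k - 1)
      else (if t + (N1 - j) + 1 \<le> N2 - j then f (j + t + (N1 - j)) else b))"
    by (rule nthG[OF jN(1) k'])
  have R: "(a # map f [j..<N2] @ [b]) ! (t + k) =
      (if t + k = 0 then a else if t + k \<le> N2 - j then f (j + (t + k) - 1) else b)"
    by (rule nthG) (use jN fit k' in auto)
  show "((if t = 0 then a else f (j + t - 1)) # map f [j..<N1]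
      @ [if t + (N1 - j) + 1 \<le> N2 - j then f (j + t + (N1 - j)) else b]) ! k =
      (a # map f [j..<N2] @ [b]) ! (t + k)"
    unfolding L R
  proof (cases "k = 0")
    case False
    show "(if k = 0 then (if t = 0 then a else f (j + t - 1)) else if k \<le> N1 - j then f (j + k - 1)
      else (if t + (N1 - j) + 1 \<le> N2 - j then f (j + t + (N1 - j)) else b)) =
      (if t + k = 0 then a else if t + k \<le> N2 - j then f (j + (t + k) - 1) else b)"
    proof (cases "k \<le> N1 - j")
      case True
      moreover have "t + k \<le> N2 - j" using True fit by linarith
      ultimately show ?thesis using False sh[of k] by (simp add: add.assoc)
    next
      case f2: False
      hence "k = N1 - j + 1" using k' by simp
      thus ?thesis using False jN by (auto simp: add.commute add.left_commute)
    qed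
  qed (use fit in simp)
qed

lemma card2: "finite S \<Longrightarrow> x \<in> S \<Longrightarrow> y \<in> S \<Longrightarrow> x \<noteq> y \<Longrightarrow> card S \<ge> 2"
  using card_mono[of S "{x, y}"] by auto

lemma r_lemma:
  assumes lang: "language A L"
    and reg: "\<And>x. x \<in> L \<Longrightarrow> bispecial L x \<Longrightarrow> length x \<ge> n0 \<Longrightarrow> regular_bispecial L x"
    and n: "n0 \<le> n" "1 \<le> n" and q: "q \<ge> 1" and j: "1 \<le> j" "j \<le> q"
    and a: "a \<noteq> pf w q (j - 1)" and b: "b \<noteq> pf w q (n + m)"
    and r: "ra \<ge> 1" "ra + 2 \<le> rb"
    and z1: "a # map (pf w q) [j..<n + ra * q + m] @ [b] \<in> L"
    and z2: "a # map (pf w q) [j..<n + rb * q + m] @ [b] \<in> L"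
  shows False
proof -
  define per where "per = pf w q"
  define N1 where "N1 = n + ra * q + m"
  define c where "c = rb - ra"
  define N2 where "N2 = n + rb * q + m"
  have c2: "c \<ge> 2" using r by (simp add: c_def)
  have N2: "N2 = N1 + c * q" using r by (simp add: N1_def N2_def c_def algebra_simps)
  have "ra * q \<ge> q" using r by simp
  hence jN1: "j + n \<le> N1" using j unfolding N1_def by linarith
  have cq: "c * q \<ge> 2 * q" using c2 by simp
  define x where "x = map per [j..<N1]"
  define a' where "a' = per (j - 1)"
  define b' where "b' = per N1"
  have b'b: "b' \<noteq> b"
  proof -
    have "per N1 = per (n + m)" unfolding N1_def per_def by (rule pf_add3)
    thus ?thesis using b by (auto simp: b'_def per_def)
  qed
  have aa': "a \<noteq> a'" using a by (simp add: a'_def per_def)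
  have z2': "a # map per [j..<N2] @ [b] \<in> L" using z2 by (simp add: per_def N2_def)
  have f1: "a # x @ [b'] \<in> L"
  proof -
    have "(if 0 = (0::nat) then a else per (j + 0 - 1)) # map per [j..<N1]
      @ [if 0 + (N1 - j) + 1 \<le> N2 - j then per (j + 0 + (N1 - j)) else b] \<in> L"
      by (rule sub_G[OF lang z2']) (use jN1 N2 in auto)
    moreover have "0 + (N1 - j) + 1 \<le> N2 - j" using N2 jN1 cq q by linarith
    ultimately show ?thesis using jN1 by (simp add: x_def b'_def)
  qed
  have f2: "a' # x @ [b'] \<in> L"
  proof -
    have "(if q = (0::nat) then a else per (j + q - 1)) # map per [j..<N1]
      @ [if q + (N1 - j) + 1 \<le> N2 - j then per (j + q + (N1 - j)) else b] \<in> L"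
    proof (rule sub_G[OF lang z2'])
      show "j \<le> N1" "N1 \<le> N2" "q + (N1 - j) \<le> N2 - j" using jN1 N2 cq q by linarith+
      fix k :: nat assume "1 \<le> k"
      hence "j + q + k - 1 = (j + k - 1) + q" by simp
      thus "per (j + q + k - 1) = per (j + k - 1)" by (simp add: per_def)
    qed
    moreover have "q + (N1 - j) + 1 \<le> N2 - j" using N2 jN1 cq q by linarith
    moreover have "per (j + q - 1) = a'"
    proof -
      have "j + q - 1 = (j - 1) + q" using j by simp
      thus ?thesis by (simp add: a'_def per_def)
    qed
    moreover have "per (j + q + (N1 - j)) = b'" using jN1
      by (simp add: b'_def per_def add.commute)
    ultimately show ?thesis using q by (simp add: x_def)
  qed
  have f3: "a' # x @ [b] \<in> L"
  proof -
    have "(if c * q = (0::nat) then a else per (j + c * q - 1)) # map per [j..<N1]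
      @ [if c * q + (N1 - j) + 1 \<le> N2 - j then per (j + c * q + (N1 - j)) else b] \<in> L"
    proof (rule sub_G[OF lang z2'])
      show "j \<le> N1" "N1 \<le> N2" "c * q + (N1 - j) \<le> N2 - j" using jN1 N2 cq q by linarith+
      fix k :: nat assume "1 \<le> k"
      hence "j + c * q + k - 1 = (j + k - 1) + c * q" by simp
      thus "per (j + c * q + k - 1) = per (j + k - 1)" by (simp add: per_def)
    qed
    moreover have "\<not> c * q + (N1 - j) + 1 \<le> N2 - j" using N2 jN1 by simp
    moreover have "c * q \<noteq> 0" using cq q by simp
    moreover have "per (j + c * q - 1) = a'"
    proof -
      have "j + c * q - 1 = (j - 1) + c * q" using j by simp
      thus ?thesis by (simp add: a'_def per_def)
    qed
    ultimately show ?thesis by (simp add: x_def)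
  qed
  have f0: "a # x @ [b] \<in> L" using z1 by (simp add: x_def per_def N1_def)
  have xne: "x \<noteq> []" using jN1 n by (simp add: x_def)
  have lx: "length x \<ge> n0" using jN1 n by (simp add: x_def)
  have xL: "x \<in> L" using lang_tl[OF lang, of a "x @ [b]"] lang_butlast[OF lang, of x b] f0 xne by simp
  have Exl: "a \<in> Ex_l L x" "a' \<in> Ex_l L x"
    using lang_butlast[OF lang, of "a # x" b] lang_butlast[OF lang, of "a' # x" b] f0 f3
    by (auto simp: Ex_l_def)
  have Exr: "b \<in> Ex_r L x" "b' \<in> Ex_r L x"
    using lang_tl[OF lang, of a "x @ [b]"] lang_tl[OF lang, of a "x @ [b']"] f0 f1
    by (auto simp: Ex_r_def)
  have bis: "bispecial L x"
    unfolding bispecial_def left_special_def right_special_def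
    using card2[OF Ex_fin(1)[OF lang] Exl aa'] card2[OF Ex_fin(2)[OF lang] Exr b'b[symmetric]]
    by simp
  have rs1: "right_special L (a # x)"
    unfolding right_special_def
    by (rule card2[OF Ex_fin(2)[OF lang], of b _ b']) (use f0 f1 b'b in \<open>auto simp: Ex_r_def\<close>)
  have rs2: "right_special L (a' # x)"
    unfolding right_special_def
    by (rule card2[OF Ex_fin(2)[OF lang], of b _ b']) (use f3 f2 b'b in \<open>auto simp: Ex_r_def\<close>)
  have "regular_bispecial L x" using reg[OF xL bis lx] .
  hence "\<exists>!a. a \<in> Ex_l L x \<and> right_special L (a # x)" unfolding regular_bispecial_def by blast
  thus False using Exl rs1 rs2 aa' by blast
qed

lemma card_le2:
  fixes R :: "nat set"
  assumes "\<And>r1 r2. r1 \<in> R \<Longrightarrow> r2 \<in> R \<Longrightarrow> r1 + 2 \<le> r2 \<Longrightarrow> False"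
  shows "finite R \<and> card R \<le> 2"
proof (cases "R = {}")
  case False
  then obtain r where r: "r \<in> R" by blast
  define r0 where "r0 = (LEAST r. r \<in> R)"
  have r0: "r0 \<in> R" using r unfolding r0_def by (rule LeastI)
  have "R \<subseteq> {r0, Suc r0}"
  proof
    fix x assume x: "x \<in> R"
    hence "r0 \<le> x" unfolding r0_def by (rule Least_le)
    moreover have "\<not> r0 + 2 \<le> x" using assms r0 x by blast
    ultimately show "x \<in> {r0, Suc r0}" by auto
  qed
  moreover have "card {r0, Suc r0} \<le> 2" by simp
  ultimately show ?thesis using card_mono[of "{r0, Suc r0}" R]
    by (meson finite.emptyI finite.insertI finite_subset le_trans)
qed simp

lemma sum_card_shift:
  assumes lang: "language A L" and inj: "inj_on F J" and FL: "\<And>j. j \<in> J \<Longrightarrow> F j \<in> L \<and> length (F j) = n"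
    and c: "\<And>j. j \<in> J \<Longrightarrow> e j \<in> E L (F j)" and fin: "\<And>v. finite (E L v)" and fJ: "finite J"
  shows "card (SIGMA j:J. E L (F j) - {e j}) = (\<Sum>v\<in>F ` J. card (E L v) - 1)"
proof -
  have "card (SIGMA j:J. E L (F j) - {e j}) = (\<Sum>j\<in>J. card (E L (F j) - {e j}))"
    using fJ fin by simp
  also have "\<dots> = (\<Sum>j\<in>J. card (E L (F j)) - 1)"
    by (rule sum.cong) (use c fin in auto)
  also have "\<dots> = (\<Sum>v\<in>F ` J. card (E L v) - 1)"
    using sum.reindex[OF inj, of "\<lambda>v. card (E L v) - 1"] by simp
  finally show ?thesis .
qed

theorem mainTheorem16:
  fixes A :: "'a set" and L :: "'a list set" and K :: int
  assumes "language A L" and "RBC L" and "growth_constant L K"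
  shows "\<exists>N. \<forall>w\<in>L. length w \<ge> N \<and> (\<exists>q. valid_step L w q) \<longrightarrow>
           finite (exit_words L w (min_valid_step L w))
           \<and> int (card (exit_words L w (min_valid_step L w))) \<le> 2 * K ^ 2"
proof -
  note lang = assms(1)
  obtain n0 where n0: "\<forall>w\<in>L. bispecial L w \<and> length w \<ge> n0 \<longrightarrow> regular_bispecial L w"
    using assms(2) unfolding RBC_def by blast
  obtain n1 where n1: "\<forall>n\<ge>n1. int (complexity L (Suc n)) - int (complexity L n) = K"
    using assms(3) unfolding growth_constant_def by blast
  have reg: "\<And>x. x \<in> L \<Longrightarrow> bispecial L x \<Longrightarrow> length x \<ge> n0 \<Longrightarrow> regular_bispecial L x"
    using n0 by blast
  show ?thesis
  proof (intro exI[of _ "n0 + n1 + 2"] ballI impI, elim conjE exE)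
    fix w q0 assume wL: "w \<in> L" and lw: "n0 + n1 + 2 \<le> length w" and vq0: "valid_step L w q0"
    define q where "q = min_valid_step L w"
    have vs: "valid_step L w q" unfolding q_def min_valid_step_def using vq0 by (rule LeastI)
    have mn: "\<And>d. valid_step L w d \<Longrightarrow> q \<le> d" unfolding q_def min_valid_step_def by (rule Least_le)
    define n where "n = length w"
    define per where "per = pf w q"
    have q1: "q \<ge> 1" and q2: "2 * q \<le> n" and hp: "has_period w q" and V: "qpow w q 2 \<in> L"
      using vs unfolding valid_step_def n_def by auto
    have QV: "qpow w q 2 = map per [0..<n + q]"
      using qpow_map[OF hp q1, of 2] q2 by (simp add: n_def per_def)
    have VL: "map per [0..<n + q] \<in> L" using V QV by simp
    have n: "n \<ge> n0" "n \<ge> n1" "n \<ge> 2" using lw by (auto simp: n_def)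
    define F where "F j = map per [j..<j + n]" for j
    have subV: "map per [i..<k] \<in> L" if "i < k" "k \<le> n + q" for i k
    proof (rule factor_in_L[OF lang VL, where i = i])
      show "length (map per [i..<k]) > 0" using that by simp
      show "i + length (map per [i..<k]) \<le> length (map per [0..<n + q])" using that by simp
      fix t assume "t < length (map per [i..<k])"
      thus "map per [i..<k] ! t = map per [0..<n + q] ! (i + t)" using that by simp
    qed
    have FL: "F j \<in> L \<and> length (F j) = n" if "j \<le> q" for j
      using subV[of j "j + n"] that n by (simp add: F_def)
    have exl: "per (j - 1) \<in> Ex_l L (F j)" if "1 \<le> j" "j \<le> q" for j
    proof -
      have "map per [j - 1..<j + n] \<in> L" using subV[of "j - 1" "j + n"] that n by simp
      moreover have "[j - 1..<j + n] = (j - 1) # [j..<j + n]" using that by (simp add: upt_conv_Cons)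
      ultimately show ?thesis by (simp add: Ex_l_def F_def)
    qed
    have exr: "per (n + m) \<in> Ex_r L (F m)" if "m < q" for m
    proof -
      have "map per [m..<Suc (m + n)] \<in> L" using subV[of m "Suc (m + n)"] that n by simp
      thus ?thesis by (simp add: Ex_r_def F_def add.commute)
    qed
    have injF: "inj_on F J" if "J \<subseteq> {0..q}" "\<And>j j'. j \<in> J \<Longrightarrow> j' \<in> J \<Longrightarrow> j < j' \<Longrightarrow> j' < j + q" for J
    proof (rule inj_onI, rule ccontr)
      fix j j' assume jj: "j \<in> J" "j' \<in> J" "F j = F j'" "j \<noteq> j'"
      have Feq: "map (pf w q) [j..<j + length w] = map (pf w q) [j'..<j' + length w]"
        using jj(3) unfolding F_def per_def n_def .
      show False
      proof (cases "j < j'")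
        case True
        show False by (rule F_inj[OF lang vs mn True that(2)[OF jj(1,2) True] Feq])
      next
        case False
        hence "j' < j" using jj(4) by simp
        show False by (rule F_inj[OF lang vs mn \<open>j' < j\<close> that(2)[OF jj(2,1) \<open>j' < j\<close>] Feq[symmetric]])
      qed
    qed
    define LA where "LA = (SIGMA j:{1..q}. Ex_l L (F j) - {per (j - 1)})"
    define RB where "RB = (SIGMA m:{0..<q}. Ex_r L (F m) - {per (n + m)})"
    define Rs where "Rs j a m b = {r. r \<ge> 1 \<and> a # map per [j..<n + r * q + m] @ [b] \<in> L}" for j a m b
    define S where "S = (SIGMA x:LA \<times> RB. (case x of ((j, a), (m, b)) \<Rightarrow> Rs j a m b))"
    define G where "G y = (case y of (((j, a), (m, b)), r) \<Rightarrow> a # map per [j..<n + r * q + m] @ [b])" for y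
    have cLA: "int (card LA) \<le> K"
    proof -
      have "card LA = (\<Sum>v\<in>F ` {1..q}. card (Ex_l L v) - 1)" unfolding LA_def
        by (rule sum_card_shift[OF lang injF, where e = "\<lambda>j. per (j - 1)" and n = n])
           (use FL exl Ex_fin[OF lang] in auto)
      moreover have "int (\<Sum>v\<in>F ` {1..q}. card (Ex_l L v) - 1) \<le> int (complexity L (Suc n)) - int (complexity L n)"
        by (rule bound_l[OF lang]) (use FL n in auto)
      ultimately show ?thesis using n1 n by simp
    qed
    have cRB: "int (card RB) \<le> K"
    proof -
      have "card RB = (\<Sum>v\<in>F ` {0..<q}. card (Ex_r L v) - 1)" unfolding RB_def
        by (rule sum_card_shift[OF lang injF, where e = "\<lambda>m. per (n + m)" and n = n])
           (use FL exr Ex_fin[OF lang] in auto)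
      moreover have "int (\<Sum>v\<in>F ` {0..<q}. card (Ex_r L v) - 1) \<le> int (complexity L (Suc n)) - int (complexity L n)"
        by (rule bound_r[OF lang]) (use FL n in auto)
      ultimately show ?thesis using n1 n by simp
    qed
    have finLA: "finite LA" unfolding LA_def using Ex_fin[OF lang] by auto
    have finRB: "finite RB" unfolding RB_def using Ex_fin[OF lang] by auto
    have Rs2: "finite (Rs j a m b) \<and> card (Rs j a m b) \<le> 2" if "((j, a), (m, b)) \<in> LA \<times> RB" for j a m b
    proof (rule card_le2)
      fix r1 r2 assume "r1 \<in> Rs j a m b" "r2 \<in> Rs j a m b" "r1 + 2 \<le> r2"
      thus False using that n(1,3)
        by (intro r_lemma[OF lang reg, where n=n and q=q and j=j and a=a and w=w and m=m and b=b and ra=r1 and rb=r2])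
          (auto simp: Rs_def LA_def RB_def per_def)
    qed
    have finS: "finite S" unfolding S_def using finLA finRB Rs2 by auto
    have cS: "card S \<le> 2 * (card LA * card RB)"
    proof -
      have "card S = (\<Sum>x\<in>LA \<times> RB. card (case x of ((j, a), (m, b)) \<Rightarrow> Rs j a m b))"
        unfolding S_def using finLA finRB Rs2 by (intro card_SigmaI) auto
      also have "\<dots> \<le> (\<Sum>x\<in>LA \<times> RB. 2)"
        by (rule sum_mono) (use Rs2 in auto)
      also have "\<dots> = 2 * (card LA * card RB)" by (simp add: card_cartesian_product)
      finally show ?thesis .
    qed
    have sub: "exit_words L w q \<subseteq> G ` S"
    proof
      fix z assume "z \<in> exit_words L w q"
      from exit_char[OF vs this] obtain j m r a b where jm: "1 \<le> j" "j \<le> q" "m < q" "r \<ge> 1"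
        "a \<noteq> per (j - 1)" "b \<noteq> per (n + m)" "z = a # map per [j..<n + r * q + m] @ [b]" "z \<in> L"
        unfolding per_def n_def by blast
      have rq: "q \<le> r * q" using jm(4) by simp
      have "a \<in> Ex_l L (F j)"
      proof -
        have "[j..<n + r * q + m] = [j..<j + n] @ [j + n..<n + r * q + m]"
          using upt_add_eq_append[of j "j + n" "n + r * q + m - (j + n)"] jm rq by (simp add: add.assoc)
        hence "z = [] @ (a # F j) @ (map per [j + n..<n + r * q + m] @ [b])" using jm(7) by (simp add: F_def)
        thus ?thesis using lang_fac[OF lang, of "[]" "a # F j" "map per [j + n..<n + r * q + m] @ [b]"] jm(8)
          by (simp add: Ex_l_def)
      qed
      moreover have "b \<in> Ex_r L (F m)"
      proof -
        have "[j..<n + r * q + m] = [j..<r * q + m] @ [r * q + m..<r * q + m + n]"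
          using upt_add_eq_append[of j "r * q + m" n] jm rq by (simp add: add.commute add.left_commute)
        moreover have "map per [r * q + m..<r * q + m + n] = F m"
          unfolding F_def by (rule nth_equalityI) (auto simp: per_def, metis add.assoc add.commute pf_add(3))
        ultimately have "z = (a # map per [j..<r * q + m]) @ (F m @ [b]) @ []" using jm(7) by simp
        thus ?thesis using lang_fac[of A L "a # map per [j..<r * q + m]" "F m @ [b]" "[]"] lang jm(8)
          by (simp add: Ex_r_def)
      qed
      ultimately have "(((j, a), (m, b)), r) \<in> S"
        unfolding S_def LA_def RB_def Rs_def using jm by auto
      moreover have "z = G (((j, a), (m, b)), r)" unfolding G_def using jm(7) by simp
      ultimately show "z \<in> G ` S" by blast
    qed
    have finE: "finite (exit_words L w q)" using finite_subset[OF sub] finS by blast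
    have "card (exit_words L w q) \<le> card S"
      using card_mono[OF finite_imageI[OF finS] sub] card_image_le[OF finS, of G] by linarith
    hence "int (card (exit_words L w q)) \<le> 2 * (int (card LA) * int (card RB))"
      using cS by (metis (mono_tags, opaque_lifting) le_trans of_nat_le_iff of_nat_mult of_nat_numeral)
    also have "\<dots> \<le> 2 * (K * K)"
      using cLA cRB by (intro mult_left_mono mult_mono) auto
    finally show "finite (exit_words L w (min_valid_step L w))
           \<and> int (card (exit_words L w (min_valid_step L w))) \<le> 2 * K ^ 2"
      using finE by (simp add: q_def power2_eq_square)
  qed
qed

end
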